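(* Let $p\in[1,\infty)$, $w$ a weight sequence, $a\in L_{p,w}$ and $i\in\mathbb{N}$. Then $$S_i(a)+\tilde S_i(a)\le\|a\|_{p,w}^p=H_i(a)+\tilde H_i(a)=W_i(a)+\tilde W_i(a)\le S_i(a)+T_i(a).$$
   Context: A weight sequence is a sequence $w=(w_i)$ of positive reals with $w_1=1\ge w_2\ge\dots$, $w_i\to0$, and $\sum_i w_i=+\infty$. For a real sequence $a$, $\|a\|_{p,w}=\sup_{\sigma}\big(\sum_{i=1}^\infty |a_{\sigma_i}|^p w_i\big)^{1/p}$ over all permutations $\sigma$ of $\mathbb{N}$; $L_{p,w}$ is the set of real sequences with finite norm. For $a\in L_{p,w}$, let $\sigma=\sigma^a:\mathbb{N}\to\mathbb{N}$ be defined recursively: $\sigma_i$ is the element $j$ of $\mathbb{N}\setminus\{\sigma_1,\dots,\sigma_{i-1}\}$ with $|a_j|$ maximal, taking the smallest such index in case of ties (for $a\in L_{p,w}$ this is well defined, $\sigma$ is injective and $|a_{\sigma_i}|$ is nonincreasing). Write $\sigma^{-1}$ for its inverse on $\sigma(\mathbb{N})$, with the convention $w_{\sigma^{-1}_j}:=0$ if $j\notin\sigma(\mathbb{N})$. Definitions: $S_i(a)=\|(a_1,\dots,a_i,0,0,\dots)\|_{p,w}^p$; $\tilde S_i(a)=\sup_{\tau}\sum_{j=1}^\infty|a_{i+\tau_j}|^p w_{i+j}$ over permutations $\tau$ of $\mathbb{N}$ (the $p$-th power of the Lorentz-type norm of the tail $(a_{i+1},a_{i+2},\dots)$ with weights $(w_{i+1},w_{i+2},\dots)$);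 $H_i(a)=\sum_{j=1}^i|a_j|^p w_{\sigma^{-1}_j}$; $\tilde H_i(a)=\sum_{j=i+1}^\infty|a_j|^p w_{\sigma^{-1}_j}$; $W_i(a)=\sum_{j=1}^i|a_{\sigma_j}|^p w_j$; $\tilde W_i(a)=\sum_{j=i+1}^\infty|a_{\sigma_j}|^p w_j$; $T_i(a)=\|(a_{i+1},a_{i+2},\dots)\|_{p,w}^p$. *)

theory Defs
  imports "HOL-Analysis.Analysis"
begin

text \<open>Convention: sequences are 0-indexed, i.e. the paper's a_k is a (k-1), w_k is w (k-1).\<close>

definition weight_seq :: "(nat \<Rightarrow> real) \<Rightarrow> bool" where
  "weight_seq w \<longleftrightarrow> w 0 = 1 \<and> (\<forall>i. 0 < w i) \<and> (\<forall>i. w (Suc i) \<le> w i)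
     \<and> w \<longlonglongrightarrow> 0 \<and> \<not> summable w"

definition lw_pow :: "real \<Rightarrow> (nat \<Rightarrow> real) \<Rightarrow> (nat \<Rightarrow> real) \<Rightarrow> ennreal" where
  "lw_pow p w a = (SUP \<sigma>\<in>{\<sigma>::nat\<Rightarrow>nat. bij \<sigma>}. \<Sum>j. ennreal (\<bar>a (\<sigma> j)\<bar> powr p * w j))"

definition in_Lpw :: "real \<Rightarrow> (nat \<Rightarrow> real) \<Rightarrow> (nat \<Rightarrow> real) \<Rightarrow> bool" where
  "in_Lpw p w a \<longleftrightarrow> lw_pow p w a < \<infinity>"

text \<open>Greedy rearrangement sigma^a: list of the first n chosen indices.\<close>
fun sig_list :: "(nat \<Rightarrow> real) \<Rightarrow> nat \<Rightarrow> nat list" where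
  "sig_list a 0 = []"
| "sig_list a (Suc n) = sig_list a n @
     [LEAST j. j \<notin> set (sig_list a n) \<and> (\<forall>k. k \<notin> set (sig_list a n) \<longrightarrow> \<bar>a k\<bar> \<le> \<bar>a j\<bar>)]"

definition sig :: "(nat \<Rightarrow> real) \<Rightarrow> nat \<Rightarrow> nat" where
  "sig a n = sig_list a (Suc n) ! n"

text \<open>w_{sigma^{-1}_j}, with value 0 if j is not in the range of sigma.\<close>
definition winv :: "(nat \<Rightarrow> real) \<Rightarrow> (nat \<Rightarrow> real) \<Rightarrow> nat \<Rightarrow> real" where
  "winv w a j = (if j \<in> range (sig a) then w (the_inv (sig a) j) else 0)"

definition S_fn :: "real \<Rightarrow> (nat \<Rightarrow> real) \<Rightarrow> nat \<Rightarrow> (nat \<Rightarrow> real) \<Rightarrow> ennreal" where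
  "S_fn p w i a = lw_pow p w (\<lambda>k. if k < i then a k else 0)"

definition St_fn :: "real \<Rightarrow> (nat \<Rightarrow> real) \<Rightarrow> nat \<Rightarrow> (nat \<Rightarrow> real) \<Rightarrow> ennreal" where
  "St_fn p w i a = (SUP \<tau>\<in>{\<tau>::nat\<Rightarrow>nat. bij \<tau>}. \<Sum>j. ennreal (\<bar>a (i + \<tau> j)\<bar> powr p * w (i + j)))"

definition H_fn :: "real \<Rightarrow> (nat \<Rightarrow> real) \<Rightarrow> nat \<Rightarrow> (nat \<Rightarrow> real) \<Rightarrow> ennreal" where
  "H_fn p w i a = ennreal (\<Sum>j<i. \<bar>a j\<bar> powr p * winv w a j)"

definition Ht_fn :: "real \<Rightarrow> (nat \<Rightarrow> real) \<Rightarrow> nat \<Rightarrow> (nat \<Rightarrow> real) \<Rightarrow> ennreal" where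
  "Ht_fn p w i a = (\<Sum>k. ennreal (\<bar>a (i + k)\<bar> powr p * winv w a (i + k)))"

definition W_fn :: "real \<Rightarrow> (nat \<Rightarrow> real) \<Rightarrow> nat \<Rightarrow> (nat \<Rightarrow> real) \<Rightarrow> ennreal" where
  "W_fn p w i a = ennreal (\<Sum>j<i. \<bar>a (sig a j)\<bar> powr p * w j)"

definition Wt_fn :: "real \<Rightarrow> (nat \<Rightarrow> real) \<Rightarrow> nat \<Rightarrow> (nat \<Rightarrow> real) \<Rightarrow> ennreal" where
  "Wt_fn p w i a = (\<Sum>k. ennreal (\<bar>a (sig a (i + k))\<bar> powr p * w (i + k)))"

definition T_fn :: "real \<Rightarrow> (nat \<Rightarrow> real) \<Rightarrow> nat \<Rightarrow> (nat \<Rightarrow> real) \<Rightarrow> ennreal" where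
  "T_fn p w i a = lw_pow p w (\<lambda>k. a (i + k))"

end

theory Submission
  imports Defs "HOL-Library.Infinite_Set"
begin


lemma ws_pos: "weight_seq w \<Longrightarrow> 0 \<le> w i"
  unfolding weight_seq_def by (meson less_imp_le)

lemma ws_anti: "weight_seq w \<Longrightarrow> j \<le> k \<Longrightarrow> w k \<le> w j"
  unfolding weight_seq_def using decseq_SucI[of w] by (simp add: decseqD)

lemma ext_bij:
  fixes f :: "nat \<Rightarrow> nat"
  assumes inj: "inj_on f {..<n}"
  shows "\<exists>\<pi>. bij \<pi> \<and> (\<forall>k<n. \<pi> k = f k)"
proof -
  define B where "B = UNIV - f ` {..<n}"
  have infB: "infinite B" unfolding B_def
    by (simp add: Diff_infinite_finite)
  have eb: "bij_betw (enumerate B) UNIV B" using bij_enumerate[OF infB] .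
  define \<pi> where "\<pi> k = (if k < n then f k else enumerate B (k - n))" for k
  have "inj \<pi>"
  proof (rule injI)
    fix x y assume h: "\<pi> x = \<pi> y"
    show "x = y"
    proof (cases "x < n"; cases "y < n")
      assume "x < n" "y < n" then show ?thesis using h inj by (auto simp: \<pi>_def inj_on_def)
    next
      assume a: "x < n" "\<not> y < n"
      have eB: "enumerate B (y - n) \<in> B" using eb bij_betwE by blast
      have e1: "f x = enumerate B (y - n)" using h a by (simp add: \<pi>_def)
      have "f x \<in> B" using e1 eB by metis
      moreover have "f x \<notin> B" using a unfolding B_def by auto
      ultimately show ?thesis by blast
    next
      assume a: "\<not> x < n" "y < n"
      have eB: "enumerate B (x - n) \<in> B" using eb bij_betwE by blast
      have e1: "f y = enumerate B (x - n)" using h a by (simp add: \<pi>_def)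
      have "f y \<in> B" using e1 eB by metis
      moreover have "f y \<notin> B" using a unfolding B_def by auto
      ultimately show ?thesis by blast
    next
      assume a: "\<not> x < n" "\<not> y < n"
      then have "enumerate B (x - n) = enumerate B (y - n)" using h by (simp add: \<pi>_def)
      moreover have "inj (enumerate B)" using eb by (simp add: bij_betw_def)
      ultimately have "x - n = y - n" by (meson injD)
      then show ?thesis using a by simp
    qed
  qed
  moreover have "surj \<pi>"
  proof -
    { fix y
      have "y \<in> range \<pi>"
      proof (cases "y \<in> B")
        case True
        then obtain m where "enumerate B m = y" using eb by (meson bij_betw_iff_bijections)
        then have "\<pi> (m + n) = y" by (simp add: \<pi>_def)
        then show ?thesis by (metis rangeI)
      next
        case False
        then obtain k where "k < n" "f k = y" unfolding B_def by auto
        then show ?thesis by (metis \<pi>_def rangeI)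
      qed }
    then show ?thesis by auto
  qed
  ultimately show ?thesis by (auto simp: bij_def \<pi>_def)
qed

lemma enum_le:
  fixes F :: "nat set"
  assumes "finite F"
  shows "\<exists>e. bij_betw e {..<card F} F \<and> (\<forall>k<card F. k \<le> e k)"
proof -
  have "\<forall>k<card F. k \<le> enumerate F k"
  proof (intro allI impI)
    fix k assume "k < card F"
    then show "k \<le> enumerate F k"
    proof (induction k)
      case 0 then show ?case by simp
    next
      case (Suc k)
      then have "enumerate F k < enumerate F (Suc k)" using finite_enumerate_step assms by blast
      then show ?case using Suc by simp
    qed
  qed
  then show ?thesis using finite_bij_enumerate[OF assms] by blast
qed

lemma flb:
  assumes ws: "weight_seq w" and fin: "finite F" and inj: "inj_on g F"
  shows "ennreal (\<Sum>j\<in>F. \<bar>x (g j)\<bar> powr p * w j) \<le> lw_pow p w x"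
proof -
  obtain e where e: "bij_betw e {..<card F} F" "\<forall>k<card F. k \<le> e k" using enum_le[OF fin] by blast
  have "(\<Sum>j\<in>F. \<bar>x (g j)\<bar> powr p * w j) = (\<Sum>k<card F. \<bar>x (g (e k))\<bar> powr p * w (e k))"
    using sum.reindex_bij_betw[OF e(1), of "\<lambda>j. \<bar>x (g j)\<bar> powr p * w j"] by simp
  also have "\<dots> \<le> (\<Sum>k<card F. \<bar>x (g (e k))\<bar> powr p * w k)"
    by (intro sum_mono mult_left_mono) (auto intro: ws_anti[OF ws] simp: e(2))
  finally have le1: "(\<Sum>j\<in>F. \<bar>x (g j)\<bar> powr p * w j) \<le> (\<Sum>k<card F. \<bar>x (g (e k))\<bar> powr p * w k)" .
  have "inj_on (g \<circ> e) {..<card F}"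
    using comp_inj_on[OF bij_betw_imp_inj_on[OF e(1)]] bij_betw_imp_surj_on[OF e(1)] inj by metis
  then obtain \<pi> where \<pi>: "bij \<pi>" "\<forall>k<card F. \<pi> k = g (e k)" using ext_bij by fastforce
  have "ennreal (\<Sum>k<card F. \<bar>x (g (e k))\<bar> powr p * w k) = (\<Sum>k<card F. ennreal (\<bar>x (\<pi> k)\<bar> powr p * w k))"
    using \<pi>(2) by (subst sum_ennreal) (auto intro!: mult_nonneg_nonneg ws_pos[OF ws])
  also have "\<dots> \<le> (\<Sum>k. ennreal (\<bar>x (\<pi> k)\<bar> powr p * w k))"
    by (intro sum_le_suminf) auto
  also have "\<dots> \<le> lw_pow p w x" unfolding lw_pow_def using \<pi>(1) by (intro SUP_upper) auto
  finally show ?thesis using le1 by (meson ennreal_leI order_trans)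
qed



definition fsl :: "(nat \<Rightarrow> real) \<Rightarrow> bool" where
  "fsl a \<longleftrightarrow> (\<forall>\<epsilon>>0. finite {k. \<epsilon> \<le> \<bar>a k\<bar>})"

lemma greedy_ex:
  assumes "fsl a" "finite L"
  shows "\<exists>j. j \<notin> L \<and> (\<forall>k. k \<notin> L \<longrightarrow> \<bar>a k\<bar> \<le> \<bar>a j\<bar>)"
proof (cases "\<forall>k. k \<notin> L \<longrightarrow> a k = 0")
  case True
  obtain j where "j \<notin> L" using assms(2) ex_new_if_finite infinite_UNIV_nat by blast
  then show ?thesis using True by auto
next
  case False
  then obtain k0 where k0: "k0 \<notin> L" "a k0 \<noteq> 0" by auto
  define S where "S = {k. k \<notin> L \<and> \<bar>a k0\<bar> \<le> \<bar>a k\<bar>}"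
  have "finite {k. \<bar>a k0\<bar> \<le> \<bar>a k\<bar>}" using assms(1) k0(2) by (simp add: fsl_def)
  moreover have "S \<subseteq> {k. \<bar>a k0\<bar> \<le> \<bar>a k\<bar>}" by (auto simp: S_def)
  ultimately have "finite S" by (rule finite_subset[rotated])
  moreover have "k0 \<in> S" using k0 by (simp add: S_def)
  ultimately have "Max ((\<lambda>k. \<bar>a k\<bar>) ` S) \<in> (\<lambda>k. \<bar>a k\<bar>) ` S" by (intro Max_in) auto
  then obtain j where j: "j \<in> S" "\<bar>a j\<bar> = Max ((\<lambda>k. \<bar>a k\<bar>) ` S)" by auto
  have "\<forall>k. k \<notin> L \<longrightarrow> \<bar>a k\<bar> \<le> \<bar>a j\<bar>"
  proof (intro allI impI)
    fix k assume "k \<notin> L"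
    show "\<bar>a k\<bar> \<le> \<bar>a j\<bar>"
    proof (cases "k \<in> S")
      case True then show ?thesis using j `finite S` by simp
    next
      case False then show ?thesis using j `k \<notin> L` by (auto simp: S_def)
    qed
  qed
  then show ?thesis using j(1) by (auto simp: S_def)
qed

lemma sig_list_len[simp]: "length (sig_list a n) = n"
  by (induction n) auto

lemma sig_list_nth: "k < n \<Longrightarrow> sig_list a n ! k = sig a k"
proof (induction n)
  case 0 then show ?case by simp
next
  case (Suc n)
  show ?case
  proof (cases "k < n")
    case True then show ?thesis using Suc by (simp add: nth_append)
  next
    case False then have "k = n" using Suc by simp
    then show ?thesis by (simp add: sig_def)
  qed
qed

lemma sig_list_set: "set (sig_list a n) = sig a ` {..<n}"
  unfolding set_conv_nth by (force simp: sig_list_nth)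

lemma sig_prop:
  assumes "fsl a"
  shows "sig a n \<notin> sig a ` {..<n} \<and> (\<forall>k. k \<notin> sig a ` {..<n} \<longrightarrow> \<bar>a k\<bar> \<le> \<bar>a (sig a n)\<bar>)"
proof -
  let ?P = "\<lambda>j. j \<notin> set (sig_list a n) \<and> (\<forall>k. k \<notin> set (sig_list a n) \<longrightarrow> \<bar>a k\<bar> \<le> \<bar>a j\<bar>)"
  have e: "\<exists>j. ?P j" using greedy_ex[OF assms, of "set (sig_list a n)"] by simp
  have "sig a n = (LEAST j. ?P j)" by (simp add: sig_def nth_append)
  with LeastI_ex[OF e] have "?P (sig a n)" by simp
  then show ?thesis by (simp add: sig_list_set)
qed

lemma sig_inj: assumes "fsl a" shows "inj (sig a)"
proof (rule injI)
  fix x y assume h: "sig a x = sig a y"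
  show "x = y"
  proof (rule ccontr)
    assume "x \<noteq> y"
    then consider "x < y" | "y < x" by linarith
    then show False
      using sig_prop[OF assms, of x] sig_prop[OF assms, of y] h by cases (metis imageI lessThan_iff)+
  qed
qed

lemma sig_greedy:
  assumes "fsl a" "x \<notin> sig a ` {..<m}" "j < m"
  shows "\<bar>a x\<bar> \<le> \<bar>a (sig a j)\<bar>"
proof -
  have "x \<notin> sig a ` {..<j}" using assms(2,3) by auto
  then show ?thesis using sig_prop[OF assms(1), of j] by blast
qed


lemma top_m:
  assumes "fsl a" "finite F" "card F = m" "0 \<le> p"
  shows "(\<Sum>x\<in>F. \<bar>a x\<bar> powr p) \<le> (\<Sum>j<m. \<bar>a (sig a j)\<bar> powr p)"
proof -
  let ?b = "\<lambda>x. \<bar>a x\<bar> powr p"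
  define G where "G = sig a ` {..<m}"
  have injs: "inj (sig a)" using sig_inj[OF assms(1)] .
  have ij: "inj_on (sig a) {..<m}" using injs by (rule inj_on_subset) simp
  have fG: "finite G" unfolding G_def by simp
  have cG: "card G = m" unfolding G_def using card_image[OF ij] by simp
  have sG: "(\<Sum>j<m. ?b (sig a j)) = sum ?b G" unfolding G_def
    using sum.reindex[OF ij, of ?b] by simp
  have dec1: "sum ?b F = sum ?b (F \<inter> G) + sum ?b (F - G)"
    using sum.Int_Diff[OF assms(2)] by blast
  have dec2: "sum ?b G = sum ?b (F \<inter> G) + sum ?b (G - F)"
    using sum.Int_Diff[OF fG, of _ F] by (simp add: Int_commute)
  have "card (F - G) = card (G - F)"
    using card_Diff_subset_Int[of F G] card_Diff_subset_Int[of G F] assms(2,3) fG cG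
    by (simp add: Int_commute)
  then obtain h where h: "bij_betw h (F - G) (G - F)"
    using finite_same_card_bij[of "F - G" "G - F"] assms(2) fG by auto
  have "sum ?b (F - G) \<le> sum (?b \<circ> h) (F - G)"
  proof (intro sum_mono)
    fix x assume x: "x \<in> F - G"
    then have "h x \<in> G - F" using h bij_betwE by blast
    then obtain j where j: "j < m" "h x = sig a j" by (auto simp: G_def)
    have "\<bar>a x\<bar> \<le> \<bar>a (h x)\<bar>" using sig_greedy[OF assms(1), of x m j] x j by (simp add: G_def)
    then show "?b x \<le> (?b \<circ> h) x" using assms(4) by (simp add: powr_mono2)
  qed
  also have "\<dots> = sum ?b (G - F)" using sum.reindex_bij_betw[OF h, of ?b] by simp
  finally show ?thesis using dec1 dec2 sG by linarith
qed


lemma abel: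
  fixes c d w :: "nat \<Rightarrow> real"
  assumes pre: "\<forall>k\<le>N. (\<Sum>j<k. c j) \<le> (\<Sum>j<k. d j)"
    and anti: "\<And>j k. j \<le> k \<Longrightarrow> w k \<le> w j" and pos: "\<And>j. 0 \<le> w j"
  shows "(\<Sum>j<N. c j * w j) \<le> (\<Sum>j<N. d j * w j)"
proof -
  have "\<forall>n\<le>N. w n * (\<Sum>j<n. d j - c j) \<le> (\<Sum>j<n. (d j - c j) * w j)"
  proof (intro allI impI)
    fix n assume "n \<le> N"
    then show "w n * (\<Sum>j<n. d j - c j) \<le> (\<Sum>j<n. (d j - c j) * w j)"
    proof (induction n)
      case 0 then show ?case by simp
    next
      case (Suc n)
      have "(\<Sum>j<Suc n. c j) \<le> (\<Sum>j<Suc n. d j)" using pre Suc(2) by blast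
      then have E: "0 \<le> (\<Sum>j<Suc n. d j - c j)" by (simp add: sum_subtractf)
      have "w (Suc n) * (\<Sum>j<Suc n. d j - c j) \<le> w n * (\<Sum>j<Suc n. d j - c j)"
        using E anti[of n "Suc n"] by (simp add: mult_right_mono)
      also have "\<dots> = w n * (\<Sum>j<n. d j - c j) + (d n - c n) * w n" by (simp add: algebra_simps)
      also have "\<dots> \<le> (\<Sum>j<n. (d j - c j) * w j) + (d n - c n) * w n" using Suc by simp
      finally show ?case by simp
    qed
  qed
  then have "w N * (\<Sum>j<N. d j - c j) \<le> (\<Sum>j<N. (d j - c j) * w j)" by simp
  moreover have "0 \<le> w N * (\<Sum>j<N. d j - c j)" using pre pos by (simp add: sum_subtractf)
  ultimately have "0 \<le> (\<Sum>j<N. (d j - c j) * w j)" by linarith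
  then show ?thesis by (simp add: algebra_simps sum_subtractf)
qed



lemma Lpw_fsl:
  assumes ws: "weight_seq w" and L: "in_Lpw p w a" and p: "0 < p"
  shows "fsl a"
  unfolding fsl_def
proof (intro allI impI, rule ccontr)
  fix \<epsilon> :: real assume e: "0 < \<epsilon>" and inf: "infinite {k. \<epsilon> \<le> \<bar>a k\<bar>}"
  let ?S = "{k. \<epsilon> \<le> \<bar>a k\<bar>}"
  have injE: "inj (enumerate ?S)" using strict_mono_enumerate[OF inf] strict_mono_imp_inj_on by blast
  have fin: "lw_pow p w a \<noteq> top" using L by (simp add: in_Lpw_def)
  define r where "r = enn2real (lw_pow p w a)"
  have Lr: "lw_pow p w a = ennreal r" unfolding r_def using fin by (simp add: top.not_eq_extremum)
  have r0: "0 \<le> r" by (simp add: r_def)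
  have "\<forall>n. (\<Sum>k<n. w k) \<le> r / \<epsilon> powr p"
  proof
    fix n
    have "ennreal (\<Sum>k\<in>{..<n}. \<bar>a (enumerate ?S k)\<bar> powr p * w k) \<le> lw_pow p w a"
      using flb[OF ws, of "{..<n}" "enumerate ?S" a p] injE by (simp add: inj_on_subset)
    then have le: "(\<Sum>k<n. \<bar>a (enumerate ?S k)\<bar> powr p * w k) \<le> r"
      using Lr r0 by simp
    have "(\<Sum>k<n. \<epsilon> powr p * w k) \<le> (\<Sum>k<n. \<bar>a (enumerate ?S k)\<bar> powr p * w k)"
    proof (intro sum_mono mult_right_mono)
      fix k
      have "enumerate ?S k \<in> ?S" using enumerate_in_set[OF inf] .
      then show "\<epsilon> powr p \<le> \<bar>a (enumerate ?S k)\<bar> powr p" using e p by (simp add: powr_mono2)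
      show "0 \<le> w k" using ws_pos[OF ws] .
    qed
    then have "\<epsilon> powr p * (\<Sum>k<n. w k) \<le> r" using le by (simp add: sum_distrib_left)
    moreover have "0 < \<epsilon> powr p" using e by simp
    ultimately show "(\<Sum>k<n. w k) \<le> r / \<epsilon> powr p" by (simp add: field_simps)
  qed
  then have "summable w" using ws_pos[OF ws] by (intro summableI_nonneg_bounded) auto
  then show False using ws by (simp add: weight_seq_def)
qed

lemma sig_sum_le:
  assumes ws: "weight_seq w" and f: "fsl a" and p: "0 \<le> p"
  shows "(\<Sum>j. ennreal (\<bar>a (sig a j)\<bar> powr p * w j)) \<le> lw_pow p w a"
  unfolding suminf_eq_SUP
proof (rule SUP_least)
  fix n
  have inj: "inj_on (sig a) {..<n}" using sig_inj[OF f] by (metis inj_on_subset subset_UNIV)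
  have "(\<Sum>j<n. ennreal (\<bar>a (sig a j)\<bar> powr p * w j)) = ennreal (\<Sum>j\<in>{..<n}. \<bar>a (sig a j)\<bar> powr p * w j)"
    by (subst sum_ennreal) (auto intro!: mult_nonneg_nonneg ws_pos[OF ws])
  also have "\<dots> \<le> lw_pow p w a" using flb[OF ws _ inj] by simp
  finally show "(\<Sum>j<n. ennreal (\<bar>a (sig a j)\<bar> powr p * w j)) \<le> lw_pow p w a" .
qed

lemma lw_le_sig:
  assumes ws: "weight_seq w" and f: "fsl a" and p: "0 \<le> p"
  shows "lw_pow p w a \<le> (\<Sum>j. ennreal (\<bar>a (sig a j)\<bar> powr p * w j))"
  unfolding lw_pow_def
proof (rule SUP_least)
  fix \<pi> :: "nat \<Rightarrow> nat" assume "\<pi> \<in> {\<sigma>. bij \<sigma>}"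
  then have ip: "inj \<pi>" by (simp add: bij_def)
  show "(\<Sum>j. ennreal (\<bar>a (\<pi> j)\<bar> powr p * w j)) \<le> (\<Sum>j. ennreal (\<bar>a (sig a j)\<bar> powr p * w j))"
    unfolding suminf_eq_SUP[of "\<lambda>j. ennreal (\<bar>a (\<pi> j)\<bar> powr p * w j)"]
  proof (rule SUP_least)
    fix N
    have pre: "\<forall>k\<le>N. (\<Sum>j<k. \<bar>a (\<pi> j)\<bar> powr p) \<le> (\<Sum>j<k. \<bar>a (sig a j)\<bar> powr p)"
    proof (intro allI impI)
      fix k
      have ik: "inj_on \<pi> {..<k}" using ip by (metis inj_on_subset subset_UNIV)
      have "(\<Sum>j<k. \<bar>a (\<pi> j)\<bar> powr p) = (\<Sum>x\<in>\<pi> ` {..<k}. \<bar>a x\<bar> powr p)"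
        using sum.reindex[OF ik, of "\<lambda>x. \<bar>a x\<bar> powr p"] by simp
      also have "\<dots> \<le> (\<Sum>j<k. \<bar>a (sig a j)\<bar> powr p)"
        using top_m[OF f _ _ p, of "\<pi> ` {..<k}" k] card_image[OF ik] by simp
      finally show "(\<Sum>j<k. \<bar>a (\<pi> j)\<bar> powr p) \<le> (\<Sum>j<k. \<bar>a (sig a j)\<bar> powr p)" .
    qed
    have "(\<Sum>j<N. \<bar>a (\<pi> j)\<bar> powr p * w j) \<le> (\<Sum>j<N. \<bar>a (sig a j)\<bar> powr p * w j)"
      using abel[OF pre, of w] ws_anti[OF ws] ws_pos[OF ws] by blast
    then have rr: "ennreal (\<Sum>j<N. \<bar>a (\<pi> j)\<bar> powr p * w j) \<le> ennreal (\<Sum>j<N. \<bar>a (sig a j)\<bar> powr p * w j)"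
      by (rule ennreal_leI)
    have e1: "(\<Sum>j<N. ennreal (\<bar>a (\<pi> j)\<bar> powr p * w j)) = ennreal (\<Sum>j<N. \<bar>a (\<pi> j)\<bar> powr p * w j)"
      by (subst sum_ennreal) (auto intro!: mult_nonneg_nonneg ws_pos[OF ws])
    have e2: "(\<Sum>j<N. ennreal (\<bar>a (sig a j)\<bar> powr p * w j)) = ennreal (\<Sum>j<N. \<bar>a (sig a j)\<bar> powr p * w j)"
      by (subst sum_ennreal) (auto intro!: mult_nonneg_nonneg ws_pos[OF ws])
    have "(\<Sum>j<N. ennreal (\<bar>a (\<pi> j)\<bar> powr p * w j)) \<le> (\<Sum>j<N. ennreal (\<bar>a (sig a j)\<bar> powr p * w j))"
      using rr e1 e2 by simp
    also have "\<dots> \<le> (\<Sum>j. ennreal (\<bar>a (sig a j)\<bar> powr p * w j))"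
      by (intro sum_le_suminf) auto
    finally show "(\<Sum>j<N. ennreal (\<bar>a (\<pi> j)\<bar> powr p * w j)) \<le> (\<Sum>j. ennreal (\<bar>a (sig a j)\<bar> powr p * w j))" .
  qed
qed

lemma P2:
  assumes ws: "weight_seq w" and f: "fsl a"
  shows "(\<Sum>j. ennreal (\<bar>a j\<bar> powr p * winv w a j)) = (\<Sum>j. ennreal (\<bar>a (sig a j)\<bar> powr p * w j))"
proof -
  let ?f = "\<lambda>j. ennreal (\<bar>a j\<bar> powr p * winv w a j)"
  have inj: "inj (sig a)" using sig_inj[OF f] .
  have bij: "bij_betw (sig a) UNIV (range (sig a))" using inj by (simp add: bij_betw_def)
  have "(\<Sum>j. ?f j) = (\<integral>\<^sup>+j. ?f j \<partial>count_space UNIV)" by (simp add: nn_integral_count_space_nat)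
  also have "\<dots> = (\<integral>\<^sup>+j. ?f j * indicator (range (sig a)) j \<partial>count_space UNIV)"
    by (intro nn_integral_cong) (auto simp: winv_def indicator_def)
  also have "\<dots> = (\<integral>\<^sup>+j. ?f j \<partial>count_space (range (sig a)))"
    by (simp add: nn_integral_count_space_indicator)
  also have "\<dots> = (\<integral>\<^sup>+x. ?f (sig a x) \<partial>count_space UNIV)"
    using nn_integral_bij_count_space[OF bij, of ?f] by simp
  also have "\<dots> = (\<integral>\<^sup>+x. ennreal (\<bar>a (sig a x)\<bar> powr p * w x) \<partial>count_space UNIV)"
    by (intro nn_integral_cong) (simp add: winv_def the_inv_f_f[OF inj])
  also have "\<dots> = (\<Sum>j. ennreal (\<bar>a (sig a j)\<bar> powr p * w j))" by (simp add: nn_integral_count_space_nat)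
  finally show ?thesis .
qed



lemma sum_split_nat:
  fixes h :: "nat \<Rightarrow> real"
  shows "(\<Sum>k<i+N. h k) = (\<Sum>k<i. h k) + (\<Sum>j<N. h (i + j))"
  by (induction N) (auto simp: add.assoc)

lemma P4:
  assumes ws: "weight_seq w" and f: "fsl a" and p: "0 \<le> p"
  shows "(\<Sum>j. ennreal (\<bar>a (sig a j)\<bar> powr p * w j)) \<le> S_fn p w i a + T_fn p w i a"
proof -
  let ?b = "\<lambda>j. \<bar>a (sig a j)\<bar> powr p * w j"
  have b0: "\<And>j. 0 \<le> ?b j" by (auto intro!: mult_nonneg_nonneg ws_pos[OF ws])
  let ?uA = "\<lambda>j. ennreal (if sig a j < i then ?b j else 0)"
  let ?uB = "\<lambda>j. ennreal (if \<not> sig a j < i then ?b j else 0)"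
  have inj: "inj (sig a)" using sig_inj[OF f] .
  have split: "(\<Sum>j. ennreal (?b j)) = (\<Sum>j. ?uA j) + (\<Sum>j. ?uB j)"
    by (subst suminf_add) (auto intro!: suminf_cong)
  have A: "(\<Sum>j. ?uA j) \<le> S_fn p w i a"
    unfolding suminf_eq_SUP[of ?uA]
  proof (rule SUP_least)
    fix n
    let ?F = "{j \<in> {..<n}. sig a j < i}"
    let ?t = "\<lambda>k. if k < i then a k else 0"
    have "(\<Sum>j<n. ?uA j) = ennreal (\<Sum>j<n. if sig a j < i then ?b j else 0)"
      by (subst sum_ennreal) (auto intro!: b0)
    also have "(\<Sum>j<n. if sig a j < i then ?b j else 0) = (\<Sum>j\<in>?F. ?b j)"
      by (rule sum.inter_filter[symmetric]) simp
    also have "\<dots> = (\<Sum>j\<in>?F. \<bar>?t (sig a j)\<bar> powr p * w j)"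
      by (intro sum.cong) auto
    also have "ennreal \<dots> \<le> lw_pow p w ?t"
      by (intro flb[OF ws]) (auto intro: inj_on_subset[OF inj])
    finally show "(\<Sum>j<n. ?uA j) \<le> S_fn p w i a" by (simp add: S_fn_def)
  qed
  have B: "(\<Sum>j. ?uB j) \<le> T_fn p w i a"
    unfolding suminf_eq_SUP[of ?uB]
  proof (rule SUP_least)
    fix n
    let ?F = "{j \<in> {..<n}. \<not> sig a j < i}"
    let ?x = "\<lambda>k. a (i + k)"
    let ?g = "\<lambda>j. sig a j - i"
    have "(\<Sum>j<n. ?uB j) = ennreal (\<Sum>j<n. if \<not> sig a j < i then ?b j else 0)"
      by (subst sum_ennreal) (auto intro!: b0)
    also have "(\<Sum>j<n. if \<not> sig a j < i then ?b j else 0) = (\<Sum>j\<in>?F. ?b j)"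
      by (rule sum.inter_filter[symmetric]) simp
    also have "\<dots> = (\<Sum>j\<in>?F. \<bar>?x (?g j)\<bar> powr p * w j)"
      by (intro sum.cong) auto
    also have "ennreal \<dots> \<le> lw_pow p w ?x"
    proof (intro flb[OF ws])
      show "inj_on ?g ?F"
      proof (rule inj_onI)
        fix x y assume "x \<in> ?F" "y \<in> ?F" "?g x = ?g y"
        then have "sig a x = sig a y" by auto
        then show "x = y" using inj by (meson injD)
      qed
    qed simp
    finally show "(\<Sum>j<n. ?uB j) \<le> T_fn p w i a" by (simp add: T_fn_def)
  qed
  show ?thesis using split A B add_mono by (metis (no_types, lifting))
qed



lemma P1:
  assumes ws: "weight_seq w" and p: "0 \<le> p"
  shows "S_fn p w i a + St_fn p w i a \<le> lw_pow p w a"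
proof -
  let ?t = "\<lambda>k. if k < i then a k else 0"
  let ?X = "\<lambda>\<pi>. \<Sum>j. ennreal (\<bar>?t (\<pi> j)\<bar> powr p * w j)"
  let ?Y = "\<lambda>\<tau>. \<Sum>j. ennreal (\<bar>a (i + \<tau> j)\<bar> powr p * w (i + j))"
  have ne: "{\<sigma>::nat\<Rightarrow>nat. bij \<sigma>} \<noteq> {}" using bij_id by blast
  have key: "?X \<pi> + ?Y \<tau> \<le> lw_pow p w a" if bp: "bij \<pi>" and bt: "bij \<tau>" for \<pi> \<tau>
  proof -
    define J where "J = \<pi> -` {..<i}"
    have ip: "inj \<pi>" using bp by (simp add: bij_def)
    have it: "inj \<tau>" using bt by (simp add: bij_def)
    have finJ: "finite J" unfolding J_def using ip by (intro finite_vimageI) auto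
    have imJ: "\<pi> ` J = {..<i}" unfolding J_def using bp by (simp add: bij_def surj_image_vimage_eq)
    have cJ: "card J = i" using card_image[OF inj_on_subset[OF ip subset_UNIV, of J]] imJ by simp
    have "?X \<pi> = (\<Sum>j\<in>J. ennreal (\<bar>?t (\<pi> j)\<bar> powr p * w j))"
      by (rule suminf_finite[OF finJ]) (auto simp: J_def)
    also have "\<dots> = ennreal (\<Sum>j\<in>J. \<bar>a (\<pi> j)\<bar> powr p * w j)"
      by (subst sum_ennreal) (auto intro!: mult_nonneg_nonneg ws_pos[OF ws] sum.cong simp: J_def)
    finally have X: "?X \<pi> = ennreal (\<Sum>j\<in>J. \<bar>a (\<pi> j)\<bar> powr p * w j)" .
    obtain e where e: "bij_betw e {..<i} J" "\<forall>k<i. k \<le> e k" using enum_le[OF finJ] cJ by auto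
    have R1: "(\<Sum>j\<in>J. \<bar>a (\<pi> j)\<bar> powr p * w j) \<le> (\<Sum>k<i. \<bar>a (\<pi> (e k))\<bar> powr p * w k)"
    proof -
      have "(\<Sum>j\<in>J. \<bar>a (\<pi> j)\<bar> powr p * w j) = (\<Sum>k<i. \<bar>a (\<pi> (e k))\<bar> powr p * w (e k))"
        using sum.reindex_bij_betw[OF e(1), of "\<lambda>j. \<bar>a (\<pi> j)\<bar> powr p * w j"] by simp
      also have "\<dots> \<le> (\<Sum>k<i. \<bar>a (\<pi> (e k))\<bar> powr p * w k)"
        by (intro sum_mono mult_left_mono) (auto intro: ws_anti[OF ws] simp: e(2))
      finally show ?thesis .
    qed
    define f where "f k = (if k < i then \<pi> (e k) else i + \<tau> (k - i))" for k
    have injf: "inj_on f {..<i+N}" for N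
    proof (rule inj_onI)
      fix x y assume xy: "x \<in> {..<i+N}" "y \<in> {..<i+N}" "f x = f y"
      have fl: "\<pi> (e k) < i" if "k < i" for k
      proof -
        have "e k \<in> J" using e(1) that bij_betwE by blast
        then show ?thesis by (simp add: J_def)
      qed
      have ie: "inj_on e {..<i}" using e(1) by (simp add: bij_betw_def)
      show "x = y"
      proof (cases "x < i"; cases "y < i")
        assume "x < i" "y < i"
        then have "e x = e y" using xy(3) ip by (simp add: f_def injD)
        then show ?thesis using ie `x < i` `y < i` by (simp add: inj_on_def)
      next
        assume "x < i" "\<not> y < i" then show ?thesis using xy(3) fl[of x] by (simp add: f_def)
      next
        assume "\<not> x < i" "y < i" then show ?thesis using xy(3) fl[of y] by (simp add: f_def)
      next
        assume "\<not> x < i" "\<not> y < i"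
        then have "\<tau> (x - i) = \<tau> (y - i)" using xy(3) by (simp add: f_def)
        then have "x - i = y - i" using it by (simp add: injD)
        then show ?thesis using `\<not> x < i` `\<not> y < i` by simp
      qed
    qed
    have part: "?X \<pi> + ennreal (\<Sum>j<N. \<bar>a (i + \<tau> j)\<bar> powr p * w (i + j)) \<le> lw_pow p w a" for N
    proof -
      have eqs: "(\<Sum>k<i+N. \<bar>a (f k)\<bar> powr p * w k) = (\<Sum>k<i. \<bar>a (\<pi> (e k))\<bar> powr p * w k)
          + (\<Sum>j<N. \<bar>a (i + \<tau> j)\<bar> powr p * w (i + j))"
        by (subst sum_split_nat) (simp add: f_def)
      have fl: "ennreal (\<Sum>k\<in>{..<i+N}. \<bar>a (f k)\<bar> powr p * w k) \<le> lw_pow p w a"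
        by (rule flb[OF ws _ injf]) simp
      have "(\<Sum>j\<in>J. \<bar>a (\<pi> j)\<bar> powr p * w j) + (\<Sum>j<N. \<bar>a (i + \<tau> j)\<bar> powr p * w (i + j))
          \<le> (\<Sum>k<i+N. \<bar>a (f k)\<bar> powr p * w k)" using R1 eqs by linarith
      then have "ennreal ((\<Sum>j\<in>J. \<bar>a (\<pi> j)\<bar> powr p * w j) + (\<Sum>j<N. \<bar>a (i + \<tau> j)\<bar> powr p * w (i + j)))
          \<le> ennreal (\<Sum>k<i+N. \<bar>a (f k)\<bar> powr p * w k)" by (rule ennreal_leI)
      then have "ennreal ((\<Sum>j\<in>J. \<bar>a (\<pi> j)\<bar> powr p * w j) + (\<Sum>j<N. \<bar>a (i + \<tau> j)\<bar> powr p * w (i + j))) \<le> lw_pow p w a"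
        using fl by (rule order_trans)
      moreover have "0 \<le> (\<Sum>j\<in>J. \<bar>a (\<pi> j)\<bar> powr p * w j)" "0 \<le> (\<Sum>j<N. \<bar>a (i + \<tau> j)\<bar> powr p * w (i + j))"
        by (auto intro!: sum_nonneg mult_nonneg_nonneg ws_pos[OF ws])
      ultimately show ?thesis using X by (simp add: ennreal_plus)
    qed
    have "?X \<pi> + ?Y \<tau> = (SUP N. ?X \<pi> + (\<Sum>j<N. ennreal (\<bar>a (i + \<tau> j)\<bar> powr p * w (i + j))))"
      unfolding suminf_eq_SUP[of "\<lambda>j. ennreal (\<bar>a (i + \<tau> j)\<bar> powr p * w (i + j))"]
      by (rule ennreal_SUP_add_right) simp
    also have "\<dots> \<le> lw_pow p w a"
    proof (rule SUP_least)
      fix N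
      have "(\<Sum>j<N. ennreal (\<bar>a (i + \<tau> j)\<bar> powr p * w (i + j))) = ennreal (\<Sum>j<N. \<bar>a (i + \<tau> j)\<bar> powr p * w (i + j))"
        by (subst sum_ennreal) (auto intro!: mult_nonneg_nonneg ws_pos[OF ws])
      then show "?X \<pi> + (\<Sum>j<N. ennreal (\<bar>a (i + \<tau> j)\<bar> powr p * w (i + j))) \<le> lw_pow p w a"
        using part[of N] by simp
    qed
    finally show ?thesis .
  qed
  have "S_fn p w i a + St_fn p w i a = (SUP \<pi>\<in>{\<sigma>. bij \<sigma>}. ?X \<pi> + St_fn p w i a)"
    unfolding S_fn_def lw_pow_def by (rule ennreal_SUP_add_left[OF ne, symmetric])
  also have "\<dots> \<le> lw_pow p w a"
  proof (rule SUP_least)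
    fix \<pi> :: "nat \<Rightarrow> nat" assume bp: "\<pi> \<in> {\<sigma>. bij \<sigma>}"
    have "?X \<pi> + St_fn p w i a = (SUP \<tau>\<in>{\<sigma>. bij \<sigma>}. ?X \<pi> + ?Y \<tau>)"
      unfolding St_fn_def by (rule ennreal_SUP_add_right[OF ne])
    also have "\<dots> \<le> lw_pow p w a" using key bp by (auto intro!: SUP_least)
    finally show "?X \<pi> + St_fn p w i a \<le> lw_pow p w a" .
  qed
  finally show ?thesis .
qed

theorem mainTheorem10:
  fixes p :: real and w a :: "nat \<Rightarrow> real" and i :: nat
  assumes "1 \<le> p" and "weight_seq w" and "in_Lpw p w a"
  shows "S_fn p w i a + St_fn p w i a \<le> lw_pow p w a
    \<and> lw_pow p w a = H_fn p w i a + Ht_fn p w i a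
    \<and> H_fn p w i a + Ht_fn p w i a = W_fn p w i a + Wt_fn p w i a
    \<and> W_fn p w i a + Wt_fn p w i a \<le> S_fn p w i a + T_fn p w i a"
proof -
  have p0: "0 \<le> p" and p1: "0 < p" using assms(1) by auto
  have ws: "weight_seq w" by fact
  have f: "fsl a" using Lpw_fsl[OF ws assms(3) p1] .
  have wv0: "0 \<le> winv w a j" for j using ws_pos[OF ws] by (simp add: winv_def)
  let ?u = "\<lambda>j. ennreal (\<bar>a j\<bar> powr p * winv w a j)"
  let ?v = "\<lambda>j. ennreal (\<bar>a (sig a j)\<bar> powr p * w j)"
  have HH: "H_fn p w i a + Ht_fn p w i a = (\<Sum>j. ?u j)"
  proof -
    have "(\<Sum>j. ?u j) = (\<Sum>j. ?u (j + i)) + (\<Sum>j<i. ?u j)" by (rule suminf_offset) simp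
    moreover have "H_fn p w i a = (\<Sum>j<i. ?u j)" unfolding H_fn_def
      by (subst sum_ennreal) (auto intro!: mult_nonneg_nonneg wv0)
    ultimately show ?thesis unfolding Ht_fn_def by (simp add: add.commute)
  qed
  have WW: "W_fn p w i a + Wt_fn p w i a = (\<Sum>j. ?v j)"
  proof -
    have "(\<Sum>j. ?v j) = (\<Sum>j. ?v (j + i)) + (\<Sum>j<i. ?v j)" by (rule suminf_offset) simp
    moreover have "W_fn p w i a = (\<Sum>j<i. ?v j)" unfolding W_fn_def
      by (subst sum_ennreal) (auto intro!: mult_nonneg_nonneg ws_pos[OF ws])
    ultimately show ?thesis unfolding Wt_fn_def by (simp add: add.commute)
  qed
  have L: "lw_pow p w a = (\<Sum>j. ?v j)"
    using sig_sum_le[OF ws f p0] lw_le_sig[OF ws f p0] by (rule antisym[rotated])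
  show ?thesis
    using P1[OF ws p0, of i a] P4[OF ws f p0, of i] P2[OF ws f, of p] HH WW L by simp
qed

end
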